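(* Assume Dickson's conjecture. Then the set \[ \left\{ \frac{\varphi(p+1)}{\varphi(p-1)} \,:\, p \text{ and } p+2 \text{ are both prime} \right\} \] is dense in $[0,\infty)$.
   Context: $\varphi$ denotes Euler's totient function. Dickson's conjecture is the following assertion: if $f_1,\dots,f_k \in \mathbb{Z}[t]$ are linear polynomials with positive leading coefficients and the product $f=f_1f_2\cdots f_k$ does not vanish identically modulo any prime (i.e., for every prime $q$ there is an integer $t$ with $q \nmid f(t)$), then there are infinitely many positive integers $t$ for which $f_1(t),\dots,f_k(t)$ are simultaneously prime. *)

theory Defs
  imports "HOL-Computational_Algebra.Computational_Algebra" "HOL-Number_Theory.Number_Theory"
begin

definition dickson_conjecture :: bool where
  "dickson_conjecture \<longleftrightarrow>
    (\<forall>fs :: int poly list.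
       (\<forall>f \<in> set fs. degree f = 1 \<and> lead_coeff f > 0) \<longrightarrow>
       (\<forall>q :: int. prime q \<longrightarrow> (\<exists>t :: int. \<not> q dvd poly (prod_list fs) t)) \<longrightarrow>
       infinite {t :: int. t > 0 \<and> (\<forall>f \<in> set fs. prime (poly f t))})"

end

theory Submission
  imports Defs "HOL-Analysis.Harmonic_Numbers"
begin


lemma totient_mult_dvd:
  fixes m e :: nat
  assumes "e dvd m" "m > 0"
  shows "totient (m * e) = e * totient m"
proof -
  have e0: "e > 0" using assms by (auto intro: Nat.gr0I)
  have g: "gcd m e = e" using assms by (simp add: gcd_nat.absorb2)
  have "totient (m * e) * totient e = totient m * totient e * e"
    using totient_gcd[of m e] g by simp
  then show ?thesis using e0 by simp
qed

lemma sigma_totient: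
  fixes m :: nat
  assumes "m > 0"
  shows "(\<Sum>e | e dvd m. e) * totient m \<le> m * m"
proof -
  have fin: "finite {e. e dvd m}" using assms by simp
  have "(\<Sum>e | e dvd m. e) * totient m = (\<Sum>e | e dvd m. totient (m * e))"
    by (simp add: sum_distrib_right totient_mult_dvd assms)
  also have "\<dots> = (\<Sum>k \<in> (\<lambda>e. m * e) ` {e. e dvd m}. totient k)"
    by (subst sum.reindex) (use assms in \<open>auto simp: inj_on_def\<close>)
  also have "\<dots> \<le> (\<Sum>k | k dvd m * m. totient k)"
    by (rule sum_mono2) (use assms in auto)
  also have "\<dots> = m * m" by (rule totient_divisor_sum)
  finally show ?thesis .
qed

lemma sigma_ge_harm:
  fixes N :: nat
  shows "real (fact N) * harm N \<le> real (\<Sum>e | e dvd fact N. e)"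
proof -
  define m :: nat where "m = fact N"
  have m0: "m > 0" by (simp add: m_def)
  have "real m * harm N = (\<Sum>n=1..N. real (m div n))"
    unfolding harm_def sum_distrib_left
  proof (rule sum.cong)
    fix n assume "n \<in> {1..N}"
    then have "n dvd m" unfolding m_def by (simp add: dvd_fact)
    then show "real m * inverse (of_nat n) = real (m div n)"
      by (simp add: real_of_nat_div field_simps)
  qed simp
  also have "\<dots> = (\<Sum>e \<in> (\<lambda>n. m div n) ` {1..N}. real e)"
  proof (subst sum.reindex)
    show "inj_on (\<lambda>n. m div n) {1..N}"
    proof (rule inj_onI)
      fix x y assume "x \<in> {1..N}" "y \<in> {1..N}" "m div x = m div y"
      moreover have "x dvd m" "y dvd m" using \<open>x \<in> {1..N}\<close> \<open>y \<in> {1..N}\<close>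
        unfolding m_def by (auto simp: dvd_fact)
      ultimately show "x = y" using m0
        by (metis dvd_mult_div_cancel mult_cancel_right nat_neq_iff not_gr0 div_0 dvd_div_eq_0_iff)
    qed
  qed simp
  also have "\<dots> \<le> (\<Sum>e | e dvd m. real e)"
  proof (rule sum_mono2)
    show "(\<lambda>n. m div n) ` {1..N} \<subseteq> {e. e dvd m}"
    proof
      fix e assume "e \<in> (\<lambda>n. m div n) ` {1..N}"
      then obtain n where n: "n \<in> {1..N}" "e = m div n" by auto
      then have "n dvd m" unfolding m_def by (auto simp: dvd_fact)
      then show "e \<in> {e. e dvd m}" using n by (metis dvd_mult_div_cancel dvd_triv_right mem_Collect_eq)
    qed
  qed (use m0 in auto)
  finally show ?thesis by (simp add: m_def)
qed

lemma prime_factors_fact: "prime_factors (fact N :: nat) = {p. prime p \<and> p \<le> N}"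
  by (auto simp: in_prime_factors_iff prime_dvd_fact_iff)

lemma full_small:
  assumes "\<eta> > 0"
  shows "\<exists>N. (\<Prod>p | prime p \<and> p \<le> N. (1 - 1 / real p)) < \<eta>"
proof -
  have "\<forall>\<^sub>F n in sequentially. 1 / \<eta> < harm n"
    using harm_at_top unfolding filterlim_at_top_dense by blast
  then obtain N where N: "1 / \<eta> < harm N" by (auto simp: eventually_sequentially)
  define m :: nat where "m = fact N"
  have m0: "m > 0" by (simp add: m_def)
  have hpos: "harm N > (0::real)" using N assms
    by (meson less_trans zero_less_divide_1_iff)
  have A: "real (totient m) = real m * (\<Prod>p | prime p \<and> p \<le> N. (1 - 1 / real p))"
    using totient_formula2[of m] by (simp add: m_def prime_factors_fact)
  have B: "real ((\<Sum>e | e dvd m. e) * totient m) \<le> real (m * m)"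
    using sigma_totient[OF m0] by linarith
  have C: "real m * harm N \<le> real (\<Sum>e | e dvd m. e)" using sigma_ge_harm[of N] by (simp add: m_def)
  have "real m * harm N * real (totient m) \<le> real m * real m"
    using B C by (simp only: of_nat_mult) (meson mult_right_mono of_nat_0_le_iff order_trans)
  then have "harm N * real (totient m) \<le> real m" using m0 by (simp add: mult.assoc)
  then have "harm N * (\<Prod>p | prime p \<and> p \<le> N. (1 - 1 / real p)) \<le> 1"
    using A m0 by (simp add: algebra_simps)
  then have "(\<Prod>p | prime p \<and> p \<le> N. (1 - 1 / real p)) \<le> 1 / harm N"
    using hpos by (simp add: field_simps)
  also have "1 / harm N < \<eta>" using N assms hpos by (simp add: field_simps)
  finally show ?thesis by blast
qed

definition fullp :: "nat \<Rightarrow> real" where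
  "fullp N = (\<Prod>p | prime p \<and> p \<le> N. (1 - 1 / real p))"

definition gp :: "nat \<Rightarrow> nat \<Rightarrow> real" where
  "gp K N = (\<Prod>p | prime p \<and> K < p \<and> p \<le> N. (1 - 1 / real p))"

lemma fullp_split:
  assumes "M \<le> N"
  shows "fullp N = fullp M * gp M N"
proof -
  have "{p. prime p \<and> p \<le> N} = {p. prime p \<and> p \<le> M} \<union> {p. prime p \<and> M < p \<and> p \<le> N}"
    using assms by auto
  then show ?thesis unfolding fullp_def gp_def
    by (simp add: prod.union_disjoint[symmetric] disjoint_iff)
qed

lemma gp_nonneg: "gp K N \<ge> 0"
  unfolding gp_def by (rule prod_nonneg) (auto dest: prime_gt_1_nat)

lemma gp_le1: "gp K N \<le> 1"
  unfolding gp_def by (rule prod_le_1) (auto dest: prime_gt_1_nat)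

lemma fullp_pos: "fullp N > 0"
  unfolding fullp_def by (rule prod_pos) (auto dest: prime_gt_1_nat)

lemma gp_empty: "N \<le> K \<Longrightarrow> gp K N = 1"
  unfolding gp_def by (rule prod.neutral) auto

lemma gp_step:
  assumes "K \<le> N" "K > 0"
  shows "gp K (Suc N) \<ge> gp K N * (1 - 1 / real K)"
proof (cases "prime (Suc N)")
  case True
  have "{p. prime p \<and> K < p \<and> p \<le> Suc N} = insert (Suc N) {p. prime p \<and> K < p \<and> p \<le> N}"
    using True assms by (auto simp: le_Suc_eq)
  then have e: "gp K (Suc N) = (1 - 1 / real (Suc N)) * gp K N"
    unfolding gp_def by simp
  have "1 - 1 / real K \<le> 1 - 1 / real (Suc N)"
    using assms by (simp add: frac_le)
  then show ?thesis unfolding e using gp_nonneg[of K N]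
    by (simp add: mult.commute mult_left_mono)
next
  case False
  have "{p. prime p \<and> K < p \<and> p \<le> Suc N} = {p. prime p \<and> K < p \<and> p \<le> N}"
    using False by (auto simp: le_Suc_eq)
  then have "gp K (Suc N) = gp K N" unfolding gp_def by simp
  then show ?thesis using gp_nonneg[of K N] assms
    by (simp add: mult_left_le)
qed

lemma gp_small:
  assumes "\<eta> > 0"
  shows "\<exists>N. gp K N < \<eta>"
proof -
  obtain N where N: "fullp N < \<eta> * fullp K"
    using full_small[of "\<eta> * fullp K"] assms fullp_pos[of K] unfolding fullp_def by auto
  define N' where "N' = max N K"
  have "fullp N' = fullp N * gp N N'" using fullp_split[of N N'] by (simp add: N'_def)
  also have "\<dots> \<le> fullp N" using gp_le1[of N N'] fullp_pos[of N] by (simp add: mult_left_le)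
  finally have "fullp K * gp K N' < \<eta> * fullp K"
    using fullp_split[of K N'] N by (simp add: N'_def)
  then have "gp K N' < \<eta>" using fullp_pos[of K] by (simp add: mult.commute)
  then show ?thesis by blast
qed

lemma totient_prod_primes:
  assumes "finite S" "\<forall>p\<in>S. prime p"
  shows "real (totient (\<Prod>S)) / real (\<Prod>S) = (\<Prod>p\<in>S. (1 - 1 / real p))"
proof -
  have "totient (\<Prod>S) = (\<Prod>p\<in>S. totient p)"
    using totient_prod_coprime[of id S] assms
    by (simp add: pairwise_def primes_coprime)
  also have "\<dots> = (\<Prod>p\<in>S. p - 1)" using assms by (simp add: totient_prime)
  finally have "real (totient (\<Prod>S)) / real (\<Prod>S) = (\<Prod>p\<in>S. real (p - 1) / real p)"
    by (simp add: prod_dividef)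
  also have "\<dots> = (\<Prod>p\<in>S. (1 - 1 / real p))"
  proof (intro prod.cong refl)
    fix p assume "p \<in> S"
    then have p: "prime p" using assms by auto
    then have "real (p - 1) = real p - 1" using prime_gt_0_nat[OF p] by (cases p) auto
    then show "real (p - 1) / real p = 1 - 1 / real p" using prime_gt_0_nat[OF p]
      by (simp add: field_simps)
  qed
  finally show ?thesis .
qed

lemma density:
  fixes y \<delta> :: real
  assumes "0 \<le> y" "y \<le> 1" "\<delta> > 0"
  shows "\<exists>P::nat. P > 0 \<and> coprime P 6 \<and> \<bar>real (totient P) / real P - y\<bar> < \<delta>"
proof (cases "1 - y < \<delta>")
  case True
  then show ?thesis using assms by (intro exI[of _ 1]) auto
next
  case False
  define K :: nat where "K = nat \<lceil>2 / \<delta>\<rceil> + 5"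
  have K5: "K \<ge> 5" by (simp add: K_def)
  have "real K > 2 / \<delta>" unfolding K_def by linarith
  then have Kd: "1 / real K < \<delta> / 2" using assms K5
    by (simp add: field_simps) 
  define y' where "y' = y + \<delta> / 2"
  have y'pos: "y' > 0" "y' < 1" unfolding y'_def using assms False by linarith+
  have ex: "\<exists>N. gp K N < y'" using gp_small y'pos by blast
  define N0 where "N0 = (LEAST N. gp K N < y')"
  have N0: "gp K N0 < y'" unfolding N0_def using ex by (rule LeastI_ex)
  have "N0 > K"
  proof (rule ccontr)
    assume "\<not> K < N0"
    then have "gp K N0 = 1" by (intro gp_empty) auto
    then show False using N0 y'pos by simp
  qed
  then obtain m where m: "N0 = Suc m" "K \<le> m" by (cases N0) auto
  have "\<not> gp K m < y'" unfolding N0_def by (rule not_less_Least) (simp add: m N0_def[symmetric])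
  then have "gp K m \<ge> y'" by simp
  then have "gp K N0 \<ge> y' * (1 - 1 / real K)"
  proof -
    have k: "1 - 1 / real K \<ge> 0" using K5 by simp
    have "y' * (1 - 1 / real K) \<le> gp K m * (1 - 1 / real K)"
      using \<open>gp K m \<ge> y'\<close> k by (rule mult_right_mono)
    also have "\<dots> \<le> gp K N0" using gp_step[of K m] m K5 by simp
    finally show ?thesis .
  qed
  moreover have "y' * (1 - 1 / real K) > y"
  proof -
    have "y' * (1 / real K) \<le> 1 / real K" using y'pos K5 by (simp add: divide_right_mono)
    moreover have "y' * (1 - 1 / real K) = y' - y' * (1 / real K)" by (simp add: algebra_simps)
    moreover have "y' = y + \<delta> / 2" by (simp add: y'_def)
    ultimately show ?thesis using Kd by linarith
  qed
  ultimately have close: "\<bar>gp K N0 - y\<bar> < \<delta>" using N0 by (simp add: y'_def abs_if)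
  define S where "S = {p. prime p \<and> K < p \<and> p \<le> N0}"
  have finS: "finite S" unfolding S_def by auto
  have pr: "\<forall>p\<in>S. prime p" unfolding S_def by auto
  have "real (totient (\<Prod>S)) / real (\<Prod>S) = gp K N0"
    using totient_prod_primes[OF finS pr] by (simp add: gp_def S_def)
  moreover have "\<Prod>S > 0" using pr finS by (simp add: prime_gt_0_nat prod_pos)
  moreover have "coprime (\<Prod>S) 6"
  proof -
    have "coprime p 6" if "p \<in> S" for p
    proof -
      have p: "prime p" "p > 5" using that K5 by (auto simp: S_def)
      have "\<not> p dvd 6"
      proof
        assume "p dvd 6"
        then have "p \<le> 6" by (simp add: dvd_imp_le)
        then have "p = 6" using p by auto
        then show False using p by simp
      qed
      then show ?thesis using p by (simp add: prime_imp_coprime)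
    qed
    then show ?thesis by (rule prod_coprime_left)
  qed
  ultimately show ?thesis using close by metis
qed



lemma lin_bad_card:
  fixes q c d :: int
  assumes "prime q" "\<not> (q dvd c \<and> q dvd d)"
  shows "card {r\<in>{0..<q}. q dvd c * r + d} \<le> (if q dvd c then 0 else 1)"
proof (cases "q dvd c")
  case True
  have E: "{r\<in>{0..<q}. q dvd c * r + d} = {}"
  proof (rule ccontr)
    assume "{r\<in>{0..<q}. q dvd c * r + d} \<noteq> {}"
    then obtain r where "q dvd c * r + d" by auto
    moreover have "q dvd c * r" using True by simp
    ultimately have "q dvd d" by (metis dvd_add_right_iff)
    then show False using assms True by simp
  qed
  show ?thesis by (subst E) (simp add: True)
next
  case False
  have fin: "finite {r\<in>{0..<q}. q dvd c * r + d}"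
    by (rule finite_subset[of _ "{0..<q}"]) auto
  have "\<forall>r1\<in>{r\<in>{0..<q}. q dvd c * r + d}. \<forall>r2\<in>{r\<in>{0..<q}. q dvd c * r + d}. r1 = r2"
  proof (intro ballI)
    fix r1 r2 assume r: "r1 \<in> {r\<in>{0..<q}. q dvd c * r + d}" "r2 \<in> {r\<in>{0..<q}. q dvd c * r + d}"
    then have "q dvd (c * r1 + d) - (c * r2 + d)" by (intro dvd_diff) auto
    then have "q dvd c * (r1 - r2)" by (simp add: algebra_simps)
    then have "q dvd r1 - r2" using False assms(1) by (simp add: prime_dvd_mult_iff)
    then have "r1 mod q = r2 mod q" by (simp add: mod_eq_dvd_iff)
    then show "r1 = r2" using r by simp
  qed
  then have "card {r\<in>{0..<q}. q dvd c * r + d} \<le> Suc 0" using card_le_Suc0_iff_eq[OF fin] by blast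
  then show ?thesis using False by simp
qed

lemma adm_lin:
  fixes q :: int and fs :: "(int \<times> int) list"
  assumes "prime q" "\<forall>(c,d)\<in>set fs. \<not>(q dvd c \<and> q dvd d)"
    "int (length (filter (\<lambda>(c,d). \<not> q dvd c) fs)) < q"
  shows "\<exists>t. \<forall>(c,d)\<in>set fs. \<not> q dvd c * t + d"
proof -
  define Bad where "Bad fs = {r\<in>{0..<q}. \<exists>(c,d)\<in>set fs. q dvd c * r + d}" for fs
  have cardB: "card (Bad fs) \<le> length (filter (\<lambda>(c,d). \<not> q dvd c) fs)"
    if "\<forall>(c,d)\<in>set fs. \<not>(q dvd c \<and> q dvd d)" for fs
    using that
  proof (induction fs)
    case Nil
    then show ?case by (simp add: Bad_def)
  next
    case (Cons x xs)
    obtain c d where x: "x = (c,d)" by (cases x)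
    have "Bad (x # xs) = {r\<in>{0..<q}. q dvd c * r + d} \<union> Bad xs"
      unfolding Bad_def x by auto
    then have "card (Bad (x # xs)) \<le> card {r\<in>{0..<q}. q dvd c * r + d} + card (Bad xs)"
      by (simp add: card_Un_le)
    also have "\<dots> \<le> (if q dvd c then 0 else 1) + length (filter (\<lambda>(c,d). \<not> q dvd c) xs)"
      using lin_bad_card[OF assms(1), of c d] Cons by (auto simp: x)
    finally show ?case by (cases "q dvd c") (simp_all add: x)
  qed
  have "card (Bad fs) < card {0..<q}"
    using cardB[OF assms(2)] assms(3) by simp
  moreover have "finite (Bad fs)" unfolding Bad_def
    by (rule finite_subset[of _ "{0..<q}"]) auto
  ultimately have "\<not> {0..<q} \<subseteq> Bad fs"
    using card_mono not_le by blast
  then obtain t where "t \<in> {0..<q}" "t \<notin> Bad fs" by blast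
  then show ?thesis unfolding Bad_def by auto
qed



lemma adm4:
  fixes a b u v q :: int
  assumes bez: "b * v - a * u = 1" and pos: "a > 0" "b > 0"
    and par: "\<not> 2 dvd b" "2 dvd a" "3 dvd b" "\<not> 3 dvd a"
    and q: "prime q"
  shows "\<exists>t. \<not> q dvd poly (prod_list [[:u, b:], [:v, a:], [:2*a*u+1, 2*a*b:], [:2*a*u+3, 2*a*b:]]) t"
proof -
  define fs where "fs = [(b,u),(a,v),(2*a*b, 2*a*u+1),(2*a*b, 2*a*u+3)]"
  have no1: "\<not> q dvd 1" using q by (simp add: prime_int_iff)
  have q2: "q \<ge> 2" using q by (simp add: prime_ge_2_int)
  have c1: "\<not> (q dvd b \<and> q dvd u)"
  proof
    assume h: "q dvd b \<and> q dvd u"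
    then have "q dvd b * v - a * u" by (intro dvd_diff) auto
    then show False using no1 bez by simp
  qed
  have c2: "\<not> (q dvd a \<and> q dvd v)"
  proof
    assume h: "q dvd a \<and> q dvd v"
    then have "q dvd b * v - a * u" by (intro dvd_diff) auto
    then show False using no1 bez by simp
  qed
  have split: "q dvd 2 \<or> q dvd a \<or> q dvd b" if "q dvd 2 * a * b"
    using that q by (simp add: prime_dvd_mult_iff)
  have c3: "\<not> (q dvd 2*a*b \<and> q dvd 2*a*u+1)"
  proof
    assume h: "q dvd 2*a*b \<and> q dvd 2*a*u+1"
    then have "q dvd 2 \<or> q dvd a \<or> q dvd b" using split by blast
    then show False
    proof (elim disjE)
      assume "q dvd 2"
      then have "q dvd (2*a*u+1) - 2*(a*u)" using h by (intro dvd_diff) auto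
      then show False using no1 by simp
    next
      assume "q dvd a"
      then have "q dvd (2*a*u+1) - 2*(a*u)" using h by (intro dvd_diff) auto
      then show False using no1 by simp
    next
      assume "q dvd b"
      then have "q dvd 2*b * v - (2*a*u+1)" using h by (intro dvd_diff) auto
      moreover have "2*b * v - (2*a*u+1) = 1" using bez by (simp add: algebra_simps)
      ultimately show False using no1 by simp
    qed
  qed
  have c4: "\<not> (q dvd 2*a*b \<and> q dvd 2*a*u+3)"
  proof
    assume h: "q dvd 2*a*b \<and> q dvd 2*a*u+3"
    then have "q dvd 2 \<or> q dvd a \<or> q dvd b" using split by blast
    then show False
    proof (elim disjE)
      assume "q dvd 2"
      then have "q dvd (2*a*u+3) - 2*(a*u+1)" using h by (intro dvd_diff) auto
      then show False using no1 by simp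
    next
      assume qa: "q dvd a"
      then have "q dvd (2*a*u+3) - 2*(a*u)" using h by (intro dvd_diff) auto
      then have "q dvd 3" by simp
      then have "q \<le> 3" by (simp add: zdvd_imp_le)
      then have "q = 2 \<or> q = 3" using q2 by auto
      then show False using qa par \<open>q dvd 3\<close> by auto
    next
      assume "q dvd b"
      then have "q dvd (2*a*u+3) - 2*b * v" using h by (intro dvd_diff) auto
      moreover have "(2*a*u+3) - 2*b * v = 1" using bez by (simp add: algebra_simps)
      ultimately show False using no1 by simp
    qed
  qed
  have cnt: "int (length (filter (\<lambda>(c,d). \<not> q dvd c) fs)) < q"
  proof -
    have le4: "length (filter (\<lambda>(c,d). \<not> q dvd c) fs) \<le> 4"
      using length_filter_le[of _ fs] by (simp add: fs_def)
    consider "q \<ge> 5" | "q = 2" | "q = 3" | "q = 4" using q2 by linarith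
    then show ?thesis
    proof cases
      case 1
      then show ?thesis using le4 by linarith
    next
      case 2
      then show ?thesis using par by (simp add: fs_def)
    next
      case 3
      then show ?thesis using par by (simp add: fs_def)
    next
      case 4
      have "q dvd 2 * 2" using 4 by simp
      then have "q dvd 2" using q prime_dvd_mult_iff[of q 2 2] by blast
      then show ?thesis using 4 by simp
    qed
  qed
  obtain t where t: "\<forall>(c,d)\<in>set fs. \<not> q dvd c * t + d"
    using adm_lin[OF q _ cnt] c1 c2 c3 c4 by (auto simp: fs_def)
  have e: "poly (prod_list [[:u, b:], [:v, a:], [:2*a*u+1, 2*a*b:], [:2*a*u+3, 2*a*b:]]) t
     = (b*t+u) * ((a*t+v) * ((2*a*b*t + (2*a*u+1)) * (2*a*b*t + (2*a*u+3))))"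
    by (simp add: algebra_simps)
  have "\<not> q dvd (b*t+u) * ((a*t+v) * ((2*a*b*t + (2*a*u+1)) * (2*a*b*t + (2*a*u+3))))"
    using t q by (simp add: fs_def prime_dvd_mult_iff)
  then show ?thesis by (metis e)
qed



lemma exists_large:
  fixes S :: "int set"
  assumes "infinite S" "\<forall>t\<in>S. t > 0"
  shows "\<exists>t\<in>S. t > N"
proof (rule ccontr)
  assume "\<not> (\<exists>t\<in>S. t > N)"
  then have "S \<subseteq> {0..N}" using assms(2) by force
  then have "finite S" using finite_subset by blast
  then show False using assms(1) by simp
qed

lemma coprime6:
  fixes P :: nat
  assumes "coprime P 6"
  shows "odd P" "\<not> 3 dvd P" "coprime P 2" "coprime P 3"
proof -
  have c: "coprime P (2 * 3)" using assms by simp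
  then have cc: "coprime P 2 \<and> coprime P 3" by (simp only: coprime_mult_right_iff)
  then show c2: "coprime P 2" and c3: "coprime P 3" by blast+
  show "odd P" using c2 by (simp add: coprime_commute)
  show "\<not> 3 dvd P"
  proof
    assume "3 dvd P"
    then have "(3::nat) = 1" using coprime_common_divisor_nat[OF c3] by simp
    then show False by simp
  qed
qed

lemma main_dickson:
  fixes P1 P2 :: nat and \<epsilon> :: real
  assumes D: "dickson_conjecture"
    and P: "P1 > 0" "P2 > 0" "coprime P1 6" "coprime P2 6" "coprime P1 P2"
    and eps: "\<epsilon> > 0"
  shows "\<exists>p::nat. prime p \<and> prime (p + 2) \<and>
     \<bar>real (totient (p + 1)) / real (totient (p - 1))
        - real (totient P2) / real (totient P1) * (2 * real P1) / (3 * real P2)\<bar> < \<epsilon>"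
proof -
  note c1 = coprime6[OF P(3)] and c2 = coprime6[OF P(4)]
  define a :: int where "a = 2 * int P1"
  define b :: int where "b = 3 * int P2"
  have apos: "a > 0" and bpos: "b > 0" using P by (simp_all add: a_def b_def)
  have "coprime (2 * P1) (3 * P2)"
    using c1 c2 P(5) by (simp add: coprime_mult_left_iff coprime_mult_right_iff coprime_commute)
  then have cab: "coprime a b" unfolding a_def b_def
    by (metis coprime_int_iff of_nat_mult of_nat_numeral)
  then have "gcd a b = 1" by simp
  then obtain u' v where uv: "u' * a + v * b = 1" using bezout_int[of a b] by auto
  define u where "u = - u'"
  have bez: "b * v - a * u = 1" using uv by (simp add: u_def algebra_simps)
  have par: "\<not> 2 dvd b" "2 dvd a" "3 dvd b" "\<not> 3 dvd a"
  proof -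
    show "\<not> 2 dvd b" using c2 by (simp add: b_def)
    show "2 dvd a" by (simp add: a_def)
    show "3 dvd b" by (simp add: b_def)
    show "\<not> 3 dvd a"
    proof
      assume "3 dvd a"
      then have "(3::int) dvd 2 * int P1" by (simp add: a_def)
      then have "(3::int) dvd int P1"
        using prime_dvd_mult_iff[of "3::int" 2 "int P1"] by auto
      then have "3 dvd P1" by presburger
      then show False using c1 by simp
    qed
  qed
  define fs where "fs = [[:u, b:], [:v, a:], [:2*a*u+1, 2*a*b:], [:2*a*u+3, 2*a*b:]]"
  have H1: "\<forall>f \<in> set fs. degree f = 1 \<and> lead_coeff f > 0"
    using apos bpos by (simp add: fs_def)
  have H2: "\<forall>q :: int. prime q \<longrightarrow> (\<exists>t :: int. \<not> q dvd poly (prod_list fs) t)"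
    using adm4[OF bez apos bpos par] by (simp add: fs_def)
  have inf: "infinite {t :: int. t > 0 \<and> (\<forall>f \<in> set fs. prime (poly f t))}"
    using D H1 H2 unfolding dickson_conjecture_def by blast
  define F :: real where "F = real (totient P2) / real (totient P1)"
  define C :: real where "C = \<bar>F * (1 - 3 * real P2 + 2 * real P1) / (3 * real P2)\<bar>"
  define N0 :: int where "N0 = \<bar>u\<bar> + \<bar>v\<bar> + 2 * a + 2 * b + \<lceil>C / \<epsilon>\<rceil> + 2"
  obtain t where t: "t > 0" "\<forall>f \<in> set fs. prime (poly f t)" "t > N0"
    using exists_large[OF inf, of N0] by auto
  define c1 where "c1 = u + b * t"
  define c2 where "c2 = v + a * t"
  have pr: "prime c1" "prime c2" "prime (2 * a * c1 + 1)" "prime (2 * a * c1 + 3)"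
    using t(2) by (simp_all add: fs_def c1_def c2_def algebra_simps)
  have bt: "b * t \<ge> t" using bpos t(1) by (simp add: mult_le_cancel_right1)
  have at: "a * t \<ge> t" using apos t(1) by (simp add: mult_le_cancel_right1)
  have c1big: "c1 > 2 * a" "c1 - 1 > \<lceil>C / \<epsilon>\<rceil>"
  proof -
    have "C \<ge> 0" by (simp add: C_def)
    then have "C / \<epsilon> \<ge> 0" using eps by simp
    then have h0: "\<lceil>C / \<epsilon>\<rceil> \<ge> 0" by simp
    have h3: "\<bar>u\<bar> \<ge> - u" by simp
    have h1: "c1 \<ge> u + t" unfolding c1_def using bt by linarith
    have h2: "t > \<bar>u\<bar> + 2 * a + \<lceil>C / \<epsilon>\<rceil> + 2" using t(3) unfolding N0_def using bpos by linarith
    show "c1 > 2 * a" using h0 h1 h2 h3 apos by linarith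
    show "c1 - 1 > \<lceil>C / \<epsilon>\<rceil>" using h0 h1 h2 h3 apos by linarith
  qed
  have c2big: "c2 > 2 * b"
  proof -
    have "c2 \<ge> v + t" unfolding c2_def using at by linarith
    moreover have "C \<ge> 0" by (simp add: C_def)
    then have "C / \<epsilon> \<ge> 0" using eps by simp
    then have h0: "\<lceil>C / \<epsilon>\<rceil> \<ge> 0" by simp
    have "t > \<bar>v\<bar> + 2 * b" using t(3) h0 abs_ge_zero[of u] apos unfolding N0_def by linarith
    moreover have "\<bar>v\<bar> \<ge> - v" by simp
    ultimately show ?thesis by linarith
  qed
  have rel: "2 * a * c1 + 2 = 2 * b * c2" using bez unfolding c1_def c2_def by (simp add: algebra_simps)
  have rel2: "b * c2 - a * c1 = 1" using bez unfolding c1_def c2_def by (simp add: algebra_simps)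
  define n1 where "n1 = nat c1"
  define n2 where "n2 = nat c2"
  define p where "p = nat (2 * a * c1 + 1)"
  have n1i: "int n1 = c1" and n2i: "int n2 = c2" using c1big c2big apos bpos
    by (simp_all add: n1_def n2_def)
  have pi: "int p = 2 * a * c1 + 1" using c1big apos unfolding p_def
    by (simp add: zero_le_mult_iff)
  have pn: "p = 4 * P1 * n1 + 1"
  proof -
    have "int p = int (4 * P1 * n1 + 1)" using pi n1i by (simp add: a_def)
    then show ?thesis by (simp only: of_nat_eq_iff)
  qed
  have pn2: "p + 1 = 6 * P2 * n2"
  proof -
    have "int (p + 1) = int (6 * P2 * n2)" using pi n2i rel by (simp add: b_def)
    then show ?thesis by (simp only: of_nat_eq_iff)
  qed
  have pm: "p - 1 = 4 * P1 * n1" using pn by simp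
  have prp: "prime p" using pr(3) pi by (metis prime_nat_int_transfer)
  have prp2: "prime (p + 2)"
  proof -
    have "int (p + 2) = 2 * a * c1 + 3" using pi by simp
    then show ?thesis using pr(4) by (metis prime_nat_int_transfer)
  qed
  have prn1: "prime n1" using pr(1) n1i by (metis prime_nat_int_transfer)
  have prn2: "prime n2" using pr(2) n2i by (metis prime_nat_int_transfer)
  have n1big: "n1 > 4 * P1" using c1big n1i by (simp add: a_def)
  have n2big: "n2 > 6 * P2" using c2big n2i by (simp add: b_def)
  have cop1: "coprime (4 * P1) n1"
  proof -
    have "\<not> n1 dvd 4 * P1" using n1big P(1) by (auto dest: dvd_imp_le)
    then have "coprime n1 (4 * P1)" by (rule prime_imp_coprime[OF prn1])
    then show ?thesis by (metis coprime_commute)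
  qed
  have cop2: "coprime (6 * P2) n2"
  proof -
    have "\<not> n2 dvd 6 * P2" using n2big P(2) by (auto dest: dvd_imp_le)
    then have "coprime n2 (6 * P2)" by (rule prime_imp_coprime[OF prn2])
    then show ?thesis by (metis coprime_commute)
  qed
  have tot4: "totient (4 * P1) = 2 * totient P1"
  proof -
    have "totient (4 * P1) = totient (2 * (2 * P1))" by simp
    also have "\<dots> = 2 * totient (2 * P1)" by (simp only: totient_double) simp
    also have "totient (2 * P1) = totient P1" using c1 by (simp add: totient_double)
    finally show ?thesis .
  qed
  have tot6: "totient (6 * P2) = 2 * totient P2"
  proof -
    have "totient (6 * P2) = totient (2 * (3 * P2))" by simp
    also have "\<dots> = totient (3 * P2)" by (subst totient_double) (use c2 in simp)
    also have "\<dots> = totient 3 * totient P2"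
      using c2 by (intro totient_mult_coprime) (simp add: coprime_commute)
    also have "totient (3::nat) = 2" using totient_prime[of 3] by simp
    finally show ?thesis .
  qed
  have totm: "totient (p - 1) = 2 * totient P1 * (n1 - 1)"
    using pm totient_mult_coprime[OF cop1] tot4 totient_prime[OF prn1] by simp
  have totp: "totient (p + 1) = 2 * totient P2 * (n2 - 1)"
    using pn2 totient_mult_coprime[OF cop2] tot6 totient_prime[OF prn2] by simp
  define x1 where "x1 = real n1 - 1"
  define x2 where "x2 = real n2 - 1"
  have x1r: "real (n1 - 1) = x1" and x2r: "real (n2 - 1) = x2"
    using prime_gt_0_nat[OF prn1] prime_gt_0_nat[OF prn2] by (simp_all add: x1_def x2_def of_nat_diff)
  have x1big: "x1 > C / \<epsilon>"
  proof -
    have "real_of_int (c1 - 1) > real_of_int \<lceil>C / \<epsilon>\<rceil>" using c1big by linarith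
    moreover have "real_of_int \<lceil>C / \<epsilon>\<rceil> \<ge> C / \<epsilon>" by simp
    moreover have "real_of_int (c1 - 1) = x1" using n1i unfolding x1_def by (metis of_int_diff of_int_of_nat_eq of_int_1)
    ultimately show ?thesis by linarith
  qed
  have Cnn: "C \<ge> 0" by (simp add: C_def)
  have x1pos: "x1 > 0" using x1big Cnn eps by (smt (verit) divide_nonneg_pos)
  have phi1: "real (totient P1) > 0" using P(1) by simp
  have rel3: "3 * real P2 * x2 - 2 * real P1 * x1 = 1 - 3 * real P2 + 2 * real P1"
  proof -
    have "int (3 * P2 * n2) = int (2 * P1 * n1 + 1)" using rel2 n1i n2i by (simp add: a_def b_def algebra_simps)
    then have "3 * P2 * n2 = 2 * P1 * n1 + 1" by (simp only: of_nat_eq_iff)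
    then have "real (3 * P2 * n2) = real (2 * P1 * n1 + 1)" by (simp only:)
    then have "3 * real P2 * real n2 - 2 * real P1 * real n1 = 1" by simp
    then show ?thesis unfolding x1_def x2_def by (simp add: algebra_simps)
  qed
  have "real (totient (p + 1)) / real (totient (p - 1))
        - real (totient P2) / real (totient P1) * (2 * real P1) / (3 * real P2)
      = F * (3 * real P2 * x2 - 2 * real P1 * x1) / (3 * real P2 * x1)"
    unfolding totm totp F_def using x1r x2r x1pos phi1 P(2)
    by (simp add: field_simps)
  also have "\<dots> = (F * (1 - 3 * real P2 + 2 * real P1) / (3 * real P2)) / x1"
    unfolding rel3 using x1pos P(2) by (simp add: field_simps)
  finally have eq: "\<bar>real (totient (p + 1)) / real (totient (p - 1))
        - real (totient P2) / real (totient P1) * (2 * real P1) / (3 * real P2)\<bar> = C / x1"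
    using x1pos by (simp add: C_def abs_divide)
  have "C / x1 < \<epsilon>"
  proof -
    have "C < \<epsilon> * x1" using x1big eps by (simp add: field_simps)
    then show ?thesis using x1pos by (simp add: field_simps)
  qed
  then show ?thesis using eq prp prp2 by metis
qed



theorem theorem1:
  assumes "dickson_conjecture"
  shows "\<forall>x :: real. x \<ge> 0 \<longrightarrow> (\<forall>\<epsilon> > 0. \<exists>p :: nat. prime p \<and> prime (p + 2) \<and>
           \<bar>real (totient (p + 1)) / real (totient (p - 1)) - x\<bar> < \<epsilon>)"
proof (intro allI impI)
  fix x :: real and \<epsilon> :: real
  assume x: "x \<ge> 0" and eps: "\<epsilon> > 0"
  show "\<exists>p :: nat. prime p \<and> prime (p + 2) \<and>
           \<bar>real (totient (p + 1)) / real (totient (p - 1)) - x\<bar> < \<epsilon>"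
  proof (cases "x \<le> 2 / 3")
    case True
    define y where "y = 3 * x / 2"
    have y: "0 \<le> y" "y \<le> 1" using x True by (simp_all add: y_def)
    obtain P2 :: nat where P2: "P2 > 0" "coprime P2 6"
      "\<bar>real (totient P2) / real P2 - y\<bar> < \<epsilon>"
      using density[OF y eps] by blast
    obtain p :: nat where p: "prime p" "prime (p + 2)"
      "\<bar>real (totient (p + 1)) / real (totient (p - 1))
        - real (totient P2) / real (totient 1) * (2 * real (1::nat)) / (3 * real P2)\<bar> < \<epsilon> / 3"
      using main_dickson[OF assms, of 1 P2 "\<epsilon> / 3"] P2 eps by auto
    have L: "real (totient P2) / real (totient 1) * (2 * real (1::nat)) / (3 * real P2)
           = 2 / 3 * (real (totient P2) / real P2)" by simp
    have "\<bar>2 / 3 * (real (totient P2) / real P2) - x\<bar> = 2 / 3 * \<bar>real (totient P2) / real P2 - y\<bar>"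
    proof -
      have e: "2 / 3 * (real (totient P2) / real P2) - x = 2 / 3 * (real (totient P2) / real P2 - y)"
        unfolding y_def by (simp add: algebra_simps)
      show ?thesis unfolding e abs_mult by simp
    qed
    also have "\<dots> < 2 / 3 * \<epsilon>" using P2(3) by simp
    finally have "\<bar>2 / 3 * (real (totient P2) / real P2) - x\<bar> < 2 / 3 * \<epsilon>" .
    then have "\<bar>real (totient (p + 1)) / real (totient (p - 1)) - x\<bar> < \<epsilon>"
      using p(3) unfolding L by linarith
    then show ?thesis using p by blast
  next
    case False
    define y where "y = 2 / (3 * x)"
    have xp: "x > 2 / 3" using False by simp
    have y: "0 < y" "y \<le> 1" using xp by (simp_all add: y_def field_simps)
    define \<delta> where "\<delta> = min (y / 2) (\<epsilon> * y^2 / 4)"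
    have dpos: "\<delta> > 0" using y eps by (simp add: \<delta>_def)
    obtain P1 :: nat where P1: "P1 > 0" "coprime P1 6"
      "\<bar>real (totient P1) / real P1 - y\<bar> < \<delta>"
      using density[of y \<delta>] y dpos by auto
    define r where "r = real (totient P1) / real P1"
    have rbig: "r > y / 2" using P1(3) unfolding r_def \<delta>_def by linarith
    have rpos: "r > 0" using rbig y by linarith
    obtain p :: nat where p: "prime p" "prime (p + 2)"
      "\<bar>real (totient (p + 1)) / real (totient (p - 1))
        - real (totient 1) / real (totient P1) * (2 * real P1) / (3 * real (1::nat))\<bar> < \<epsilon> / 3"
      using main_dickson[OF assms, of P1 1 "\<epsilon> / 3"] P1 eps by (auto simp: coprime_commute)
    have L: "real (totient 1) / real (totient P1) * (2 * real P1) / (3 * real (1::nat)) = 2 / 3 / r"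
      unfolding r_def by simp
    have x_eq: "x = 2 / 3 / y" using xp unfolding y_def by (simp add: field_simps)
    have "\<bar>2 / 3 / r - x\<bar> = 2 / 3 * \<bar>y - r\<bar> / (r * y)"
    proof -
      have e: "2 / 3 / r - x = 2 / 3 * (y - r) / (r * y)"
        unfolding x_eq using rpos y by (simp add: field_simps)
      show ?thesis unfolding e abs_divide abs_mult using rpos y by simp
    qed
    also have "\<dots> \<le> 2 / 3 * \<bar>y - r\<bar> / (y / 2 * y)"
      using rbig y by (intro divide_left_mono mult_right_mono) (auto intro: mult_pos_pos)
    also have "\<dots> < 2 / 3 * \<delta> / (y / 2 * y)"
      using P1(3) y unfolding r_def by (intro divide_strict_right_mono) (auto simp: abs_minus_commute)
    also have "\<dots> \<le> 2 / 3 * (\<epsilon> * y^2 / 4) / (y / 2 * y)"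
      using y eps by (intro divide_right_mono mult_left_mono) (auto simp: \<delta>_def)
    also have "\<dots> = \<epsilon> / 3" using y by (simp add: field_simps power2_eq_square)
    finally have "\<bar>2 / 3 / r - x\<bar> < \<epsilon> / 3" .
    then have "\<bar>real (totient (p + 1)) / real (totient (p - 1)) - x\<bar> < \<epsilon>"
      using p(3) eps unfolding L by linarith
    then show ?thesis using p by blast
  qed
qed

end
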